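(* Let $X$ be a countable set and let $w$ be an essentially locally finite weight on $X$ such that $(X,\delta_w)$ is complete. Then for all $x,y\in X$ there exists a $w$-geodesic from $x$ to $y$.
   Context: A weight on $X$ is a symmetric function $w:X\times X\to[0,\infty]$ with $w(x,y)=0$ iff $x=y$; it is essentially locally finite if $\#\{y\in X\mid w(x,y)<R\}<\infty$ for all $x\in X$, $R>0$. A path from $x$ to $y$ is a finite sequence $(x_0,\dots,x_n)$ of pairwise distinct elements of $X$ with $x_0=x$, $x_n=y$; its $w$-length is $l_w=\sum_{i=1}^n w(x_{i-1},x_i)$, and $\delta_w(x,y)$ is the infimum of $l_w$ over all paths from $x$ to $y$ (a pseudo metric, possibly taking the value $\infty$). A $w$-geodesic from $x$ to $y$ is a path $\gamma$ from $x$ to $y$ with $l_w(\gamma)=\delta_w(x,y)$. *)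

theory Defs
  imports "HOL-Library.Extended_Nonnegative_Real" "HOL-Library.Countable_Set"
begin

definition weight_on :: "'a set \<Rightarrow> ('a \<Rightarrow> 'a \<Rightarrow> ennreal) \<Rightarrow> bool" where
  "weight_on X w \<longleftrightarrow> (\<forall>x\<in>X. \<forall>y\<in>X. w x y = w y x) \<and> (\<forall>x\<in>X. \<forall>y\<in>X. w x y = 0 \<longleftrightarrow> x = y)"

definition ess_locally_finite :: "'a set \<Rightarrow> ('a \<Rightarrow> 'a \<Rightarrow> ennreal) \<Rightarrow> bool" where
  "ess_locally_finite X w \<longleftrightarrow> (\<forall>x\<in>X. \<forall>R::real. R > 0 \<longrightarrow> finite {y\<in>X. w x y < ennreal R})"

definition is_path :: "'a set \<Rightarrow> 'a \<Rightarrow> 'a \<Rightarrow> 'a list \<Rightarrow> bool" where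
  "is_path X x y p \<longleftrightarrow> p \<noteq> [] \<and> distinct p \<and> set p \<subseteq> X \<and> hd p = x \<and> last p = y"

definition path_length :: "('a \<Rightarrow> 'a \<Rightarrow> ennreal) \<Rightarrow> 'a list \<Rightarrow> ennreal" where
  "path_length w p = (\<Sum>i<length p - 1. w (p ! i) (p ! Suc i))"

definition delta_w :: "'a set \<Rightarrow> ('a \<Rightarrow> 'a \<Rightarrow> ennreal) \<Rightarrow> 'a \<Rightarrow> 'a \<Rightarrow> ennreal" where
  "delta_w X w x y = (INF p\<in>{p. is_path X x y p}. path_length w p)"

definition is_geodesic :: "'a set \<Rightarrow> ('a \<Rightarrow> 'a \<Rightarrow> ennreal) \<Rightarrow> 'a \<Rightarrow> 'a \<Rightarrow> 'a list \<Rightarrow> bool" where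
  "is_geodesic X w x y p \<longleftrightarrow> is_path X x y p \<and> path_length w p = delta_w X w x y"

definition complete_pmetric :: "'a set \<Rightarrow> ('a \<Rightarrow> 'a \<Rightarrow> ennreal) \<Rightarrow> bool" where
  "complete_pmetric X d \<longleftrightarrow>
     (\<forall>s::nat \<Rightarrow> 'a. (\<forall>n. s n \<in> X) \<and>
        (\<forall>e::real. e > 0 \<longrightarrow> (\<exists>N. \<forall>m\<ge>N. \<forall>n\<ge>N. d (s m) (s n) < ennreal e))
      \<longrightarrow> (\<exists>z\<in>X. \<forall>e::real. e > 0 \<longrightarrow> (\<exists>N. \<forall>n\<ge>N. d (s n) z < ennreal e)))"

end

theory Submission
  imports Defs
begin

lemma pl_nth_ge: "Suc i < length p \<Longrightarrow> w (p!i) (p!Suc i) \<le> path_length w p"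
  unfolding path_length_def by (intro member_le_sum) auto

lemma pl_prefix: "p \<noteq> [] \<Longrightarrow> path_length w p \<le> path_length w (p @ ys)"
proof -
  assume "p \<noteq> []"
  have "path_length w p = (\<Sum>i<length p - 1. w ((p@ys) ! i) ((p@ys) ! Suc i))"
    unfolding path_length_def by (intro sum.cong) (auto simp: nth_append)
  also have "\<dots> \<le> path_length w (p @ ys)"
    unfolding path_length_def by (intro sum_mono2) auto
  finally show ?thesis .
qed

lemma sum_shift_aux: "sum f {m..<n} = (\<Sum>i<n-m. f (m+i))" if "m \<le> n" for f :: "nat \<Rightarrow> ennreal"
proof -
  have "sum f {m..<n} = sum f {0+m..<(n-m)+m}" using that by simp
  also have "\<dots> = (\<Sum>i\<in>{0..<n-m}. f (i+m))" by (rule sum.shift_bounds_nat_ivl)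
  finally show ?thesis by (simp add: atLeast0LessThan add.commute)
qed

lemma pl_map_upt: "m \<le> n \<Longrightarrow> path_length w (map v [m..<Suc n]) = (\<Sum>i\<in>{m..<n}. w (v i) (v (Suc i)))"
  unfolding path_length_def
  by (subst sum_shift_aux) (auto intro!: sum.cong simp: nth_map_upt Suc_diff_le simp del: upt_Suc)

lemma pl_rev:
  assumes "\<forall>a\<in>set p. \<forall>b\<in>set p. w a b = w b a"
  shows "path_length w (rev p) = path_length w p"
proof -
  let ?L = "length p"
  let ?f = "\<lambda>j. w (p!j) (p!Suc j)"
  have "path_length w (rev p) = (\<Sum>i<?L - 1. ?f (?L - 1 - Suc i))"
    unfolding path_length_def
  proof (rule sum.cong)
    show "{..<length (rev p) - 1} = {..<length p - 1}" by simp
  next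
    fix i assume i: "i \<in> {..<length p - 1}"
    then have e1: "rev p ! i = p ! (?L - 1 - i)" "rev p ! Suc i = p ! (?L - 1 - Suc i)"
      by (auto simp: rev_nth)
    have e2: "Suc (?L - 1 - Suc i) = ?L - 1 - i" using i by auto
    have m: "p ! (?L - 1 - i) \<in> set p" "p ! (?L - 1 - Suc i) \<in> set p" using i by auto
    have "w (rev p ! i) (rev p ! Suc i) = w (p ! (?L - 1 - i)) (p ! (?L - 1 - Suc i))"
      by (simp only: e1)
    also have "\<dots> = w (p ! (?L - 1 - Suc i)) (p ! (?L - 1 - i))"
      using assms m by blast
    also have "\<dots> = ?f (?L - 1 - Suc i)" by (simp only: e2)
    finally show "w (rev p ! i) (rev p ! Suc i) = ?f (?L - 1 - Suc i)" .
  qed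
  also have "\<dots> = path_length w p"
    unfolding path_length_def by (rule sum.nat_diff_reindex)
  finally show ?thesis .
qed

lemma isolated:
  assumes "weight_on X w" "ess_locally_finite X w" "z \<in> X"
  shows "\<exists>e>0. \<forall>u\<in>X. u \<noteq> z \<longrightarrow> ennreal e \<le> delta_w X w u z"
proof -
  let ?F = "{u\<in>X. w z u < 1}"
  have "finite {u\<in>X. w z u < ennreal 1}" using assms(2,3) unfolding ess_locally_finite_def by (meson zero_less_one)
  then have fin: "finite ?F" by simp
  define e where "e = Min (insert 1 ((\<lambda>u. enn2real (w z u)) ` (?F - {z})))"
  have epos: "e > 0" unfolding e_def using fin
  proof (subst Min_gr_iff)
    show "\<forall>a\<in>insert 1 ((\<lambda>u. enn2real (w z u)) ` (?F - {z})). 0 < a"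
    proof
      fix a assume "a \<in> insert 1 ((\<lambda>u. enn2real (w z u)) ` (?F - {z}))"
      then consider "a = 1" | u where "u \<in> ?F" "u \<noteq> z" "a = enn2real (w z u)" by auto
      then show "0 < a"
      proof cases
        case 2
        then have "w z u \<noteq> 0" using assms(1,3) unfolding weight_on_def by auto
        moreover have "w z u < top"
        proof (rule order.strict_trans)
          show "w z u < 1" using 2 by simp
        qed simp
        ultimately show ?thesis using 2 by (simp add: enn2real_positive_iff zero_less_iff_neq_zero)
      qed simp
    qed
  qed auto
  have ebound: "ennreal e \<le> w z u" if "u \<in> X" "u \<noteq> z" for u
  proof (cases "w z u < ennreal 1")
    case True
    then have "e \<le> enn2real (w z u)" unfolding e_def using fin that by (intro Min_le) auto
    moreover have "w z u < top"
    proof (rule order.strict_trans)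
      show "w z u < 1" using True by simp
    qed simp
    ultimately show ?thesis by (metis ennreal_enn2real ennreal_leI less_top)
  next
    case False
    have "e \<le> 1" unfolding e_def using fin by (intro Min_le) auto
    then show ?thesis using False by (metis ennreal_leI not_less order.trans ennreal_1)
  qed
  show ?thesis
  proof (intro exI[of _ e] conjI epos ballI impI)
    fix u assume u: "u \<in> X" "u \<noteq> z"
    show "ennreal e \<le> delta_w X w u z"
      unfolding delta_w_def
    proof (rule INF_greatest)
      fix p assume "p \<in> {p. is_path X u z p}"
      then have p: "p \<noteq> []" "distinct p" "set p \<subseteq> X" "hd p = u" "last p = z"
        unfolding is_path_def by auto
      have len: "length p \<ge> 2"
      proof (rule ccontr)
        assume "\<not> length p \<ge> 2"
        then have "length p < 2" by simp
        moreover have "length p \<noteq> 0" using p(1) by simp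
        ultimately have "length p = 1" by linarith
        then obtain a where "p = [a]" by (cases p) auto
        then show False using p u by auto
      qed
      define k where "k = length p - 2"
      have k: "Suc k < length p" "Suc (Suc k) = length p" using len unfolding k_def by auto
      have pz: "p ! Suc k = z" using p(1,5) k(2) by (metis last_conv_nth diff_Suc_1)
      have pk: "p ! k \<noteq> z" using p(2) k pz by (metis Suc_lessD n_not_Suc_n nth_eq_iff_index_eq)
      have pkX: "p ! k \<in> X" using p(3) k by (meson Suc_lessD nth_mem subsetD)
      have "ennreal e \<le> w z (p!k)" using ebound pkX pk by auto
      also have "\<dots> = w (p!k) (p!Suc k)" using pz assms(1,3) pkX unfolding weight_on_def by auto
      also have "\<dots> \<le> path_length w p" by (rule pl_nth_ge) (use k in auto)
      finally show "ennreal e \<le> path_length w p" .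
    qed
  qed
qed

lemma path_map_upt:
  assumes "inj v" "\<And>n. v n \<in> X" "m \<le> n"
  shows "is_path X (v m) (v n) (map v [m..<Suc n])"
proof -
  have "distinct (map v [m..<Suc n])"
    using assms(1) by (simp add: distinct_map inj_on_def)
  moreover have "last (map v [m..<Suc n]) = v n"
    using assms(3) by (simp add: last_map del: upt_Suc)
  moreover have "hd (map v [m..<Suc n]) = v m"
    using assms(3) by (simp add: hd_map upt_conv_Cons del: upt_Suc)
  ultimately show ?thesis using assms(2,3) unfolding is_path_def by auto
qed

lemma rev_path: "is_path X a b p \<Longrightarrow> is_path X b a (rev p)"
  unfolding is_path_def by (auto simp: hd_rev last_rev)

theorem lemma2p4:
  fixes X :: "'a set" and w :: "'a \<Rightarrow> 'a \<Rightarrow> ennreal"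
  assumes "countable X"
    and "weight_on X w"
    and "ess_locally_finite X w"
    and "complete_pmetric X (delta_w X w)"
    and "x \<in> X" and "y \<in> X"
  shows "\<exists>p. is_geodesic X w x y p"
proof -
  note wsym = assms(2)[unfolded weight_on_def]
  define D where "D = delta_w X w x y"
  show ?thesis
  proof (cases "D = top")
    case True
    define p where "p = (if x = y then [x] else [x, y])"
    have p: "is_path X x y p" unfolding p_def is_path_def using assms(5,6) by auto
    have "D \<le> path_length w p" unfolding D_def delta_w_def by (rule INF_lower) (use p in simp)
    then have "path_length w p = D" using True by (simp add: top_le)
    then show ?thesis using p unfolding is_geodesic_def D_def by auto
  next
    case False
    define r where "r = enn2real D + 1"
    have rpos: "r > 0" unfolding r_def by (simp add: add_nonneg_pos)
    define R where "R = ennreal r"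
    have DR: "D < R" unfolding R_def r_def using False
      by (cases D rule: ennreal_cases) (auto simp: ennreal_less_iff)
    have Rtop: "R < top" unfolding R_def by simp
    define T where "T = {p. p \<noteq> [] \<and> distinct p \<and> set p \<subseteq> X \<and> hd p = x \<and> path_length w p < R}"
    have Tpre: "a \<in> T" if "q \<in> T" "q = a @ ys" "a \<noteq> []" for q a ys
    proof -
      have "path_length w a \<le> path_length w q" using pl_prefix[OF that(3)] that(2) by simp
      then show ?thesis using that unfolding T_def by auto
    qed
    have finT: "finite T"
    proof (rule ccontr)
      assume infT: "infinite T"
      define good where "good p \<longleftrightarrow> infinite {q\<in>T. \<exists>ys. q = p @ ys}" for p
      have step: "\<exists>c. p @ [c] \<in> T \<and> good (p @ [c])" if pT: "p \<in> T" and gp: "good p" for p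
      proof -
        have pne: "p \<noteq> []" and pX: "set p \<subseteq> X" using pT unfolding T_def by auto
        have lX: "last p \<in> X" using pne pX by auto
        define C where "C = {c\<in>X. w (last p) c < ennreal r}"
        have finC: "finite C" unfolding C_def using assms(3) lX rpos unfolding ess_locally_finite_def by blast
        have sub: "{q\<in>T. \<exists>ys. q = p @ ys} \<subseteq> insert p (\<Union>c\<in>C. {q\<in>T. \<exists>ys. q = (p @ [c]) @ ys})"
        proof
          fix q assume "q \<in> {q\<in>T. \<exists>ys. q = p @ ys}"
          then obtain ys where q: "q \<in> T" "q = p @ ys" by auto
          show "q \<in> insert p (\<Union>c\<in>C. {q\<in>T. \<exists>ys. q = (p @ [c]) @ ys})"
          proof (cases ys)
            case Nil then show ?thesis using q by simp
          next
            case (Cons c ys')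
            have cX: "c \<in> X" using q Cons unfolding T_def by auto
            define i where "i = length p - 1"
            have i: "Suc i < length q" "q ! i = last p" "q ! Suc i = c"
              using pne q(2) Cons unfolding i_def
              by (auto simp: nth_append last_conv_nth)
            have "w (last p) c \<le> path_length w q" using pl_nth_ge[OF i(1), of w] i by simp
            also have "\<dots> < R" using q unfolding T_def by auto
            finally have "c \<in> C" unfolding C_def R_def using cX by auto
            then show ?thesis using q Cons by auto
          qed
        qed
        have "\<exists>c\<in>C. good (p @ [c])"
        proof (rule ccontr)
          assume "\<not> (\<exists>c\<in>C. good (p @ [c]))"
          then have "finite (insert p (\<Union>c\<in>C. {q\<in>T. \<exists>ys. q = (p @ [c]) @ ys}))"
            using finC unfolding good_def by auto
          then show False using gp sub unfolding good_def by (meson finite_subset)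
        qed
        then obtain c where gc: "good (p @ [c])" by auto
        then have "{q\<in>T. \<exists>ys. q = (p @ [c]) @ ys} \<noteq> {}"
          unfolding good_def by (rule infinite_imp_nonempty)
        then obtain q ys where "q \<in> T" "q = (p @ [c]) @ ys" by blast
        then have "p @ [c] \<in> T" using Tpre by blast
        then show ?thesis using gc by blast
      qed
      have xT: "[x] \<in> T"
      proof -
        obtain q where q: "q \<in> T" using infinite_imp_nonempty[OF infT] by blast
        then have "q = [x] @ tl q" "q \<noteq> []" "hd q = x" unfolding T_def by auto
        then have "q = [x] @ tl q" by (metis append_Cons append_Nil list.collapse)
        then show ?thesis using Tpre q by blast
      qed
      have "{q\<in>T. \<exists>ys. q = [x] @ ys} = T"
      proof safe
        fix q assume "q \<in> T"
        then have "q \<noteq> []" "hd q = x" unfolding T_def by auto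
        then show "\<exists>ys. q = [x] @ ys" by (metis append_Cons append_Nil list.collapse)
      qed
      then have good0: "good [x]" unfolding good_def using infT by simp
      define nxt where "nxt p = (SOME c. p @ [c] \<in> T \<and> good (p @ [c]))" for p
      define br where "br = rec_nat [x] (\<lambda>n p. p @ [nxt p])"
      have br0: "br 0 = [x]" and brS: "br (Suc n) = br n @ [nxt (br n)]" for n
        by (simp_all add: br_def)
      have inv: "br n \<in> T \<and> good (br n)" for n
      proof (induction n)
        case 0 then show ?case using xT good0 br0 by simp
      next
        case (Suc n)
        then have "\<exists>c. br n @ [c] \<in> T \<and> good (br n @ [c])" using step by blast
        then have "br n @ [nxt (br n)] \<in> T \<and> good (br n @ [nxt (br n)])"
          unfolding nxt_def by (rule someI_ex)
        then show ?case using brS by simp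
      qed
      define v where "v n = last (br n)" for n
      have brv: "br n = map v [0..<Suc n]" for n
      proof (induction n)
        case 0 then show ?case by (simp add: v_def br0)
      next
        case (Suc n)
        have "v (Suc n) = nxt (br n)" by (simp add: v_def brS)
        then show ?case using Suc by (simp add: brS)
      qed
      have vX: "v n \<in> X" for n
        using inv[of n] unfolding T_def v_def by auto
      have vinj: "inj v"
      proof (rule injI)
        fix i j assume eq: "v i = v j"
        define k where "k = max i j"
        have "distinct (map v [0..<Suc k])" using inv[of k] brv[of k] unfolding T_def by auto
        then have "inj_on v {0..<Suc k}" by (simp add: distinct_map del: upt_Suc)
        then show "i = j" using eq unfolding k_def by (auto simp: inj_on_def)
      qed
      define a where "a i = w (v i) (v (Suc i))" for i
      have sumR: "sum a {..<n} < R" for n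
      proof -
        have "sum a {..<n} = path_length w (br n)"
          unfolding brv a_def by (simp add: pl_map_upt atLeast0LessThan del: upt_Suc)
        then show ?thesis using inv[of n] unfolding T_def by auto
      qed
      have atop: "a i < top" for i
      proof -
        have "a i \<le> sum a {..<Suc i}" by (intro member_le_sum) auto
        also have "\<dots> < R" by (rule sumR)
        finally show ?thesis using Rtop by simp
      qed
      define c where "c i = enn2real (a i)" for i
      have ac: "a i = ennreal (c i)" for i unfolding c_def using atop by simp
      have c0: "0 \<le> c i" for i unfolding c_def by simp
      have sumc: "sum a I = ennreal (sum c I)" for I
        unfolding ac using c0 by (simp add: sum_ennreal)
      have "sum c {..<n} \<le> r" for n
      proof -
        have "ennreal (sum c {..<n}) < ennreal r" using sumR[of n] unfolding sumc R_def .
        then show ?thesis by (simp add: ennreal_less_iff sum_nonneg c0)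
      qed
      then have summ: "summable c" using c0 by (intro summableI_nonneg_bounded)
      have dbound: "delta_w X w (v m) (v n) \<le> sum a {m..<n} \<and> delta_w X w (v n) (v m) \<le> sum a {m..<n}"
        if "m \<le> n" for m n
      proof -
        have P: "is_path X (v m) (v n) (map v [m..<Suc n])" by (rule path_map_upt[OF vinj vX that])
        have L: "path_length w (map v [m..<Suc n]) = sum a {m..<n}"
          unfolding a_def using that by (rule pl_map_upt)
        have sym: "\<forall>a\<in>set (map v [m..<Suc n]). \<forall>b\<in>set (map v [m..<Suc n]). w a b = w b a"
          using wsym vX by auto
        have "delta_w X w (v m) (v n) \<le> path_length w (map v [m..<Suc n])"
          unfolding delta_w_def by (rule INF_lower) (use P in simp)
        moreover have "delta_w X w (v n) (v m) \<le> path_length w (rev (map v [m..<Suc n]))"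
          unfolding delta_w_def by (rule INF_lower) (use rev_path[OF P] in simp)
        ultimately show ?thesis using L pl_rev[OF sym] by simp
      qed
      have cauchy: "\<forall>e::real. e > 0 \<longrightarrow> (\<exists>N. \<forall>m\<ge>N. \<forall>n\<ge>N. delta_w X w (v m) (v n) < ennreal e)"
      proof (intro allI impI)
        fix e :: real assume e: "e > 0"
        obtain N where N: "\<forall>m\<ge>N. \<forall>n. norm (sum c {m..<n}) < e"
          using summ e unfolding summable_Cauchy by blast
        have lt: "sum a {m..<n} < ennreal e" if "m \<ge> N" for m n
        proof -
          have "norm (sum c {m..<n}) < e" using N that by blast
          then have "sum c {m..<n} < e" by simp
          then show ?thesis unfolding sumc using e by (intro ennreal_lessI)
        qed
        show "\<exists>N. \<forall>m\<ge>N. \<forall>n\<ge>N. delta_w X w (v m) (v n) < ennreal e"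
        proof (intro exI allI impI)
          fix m n assume mn: "m \<ge> N" "n \<ge> N"
          show "delta_w X w (v m) (v n) < ennreal e"
          proof (cases "m \<le> n")
            case True
            then show ?thesis using dbound[OF True] lt[OF mn(1), of n] by (meson order.strict_trans1)
          next
            case False
            then have "n \<le> m" by simp
            then show ?thesis using dbound[OF \<open>n \<le> m\<close>] lt[OF mn(2), of m] by (meson order.strict_trans1)
          qed
        qed
      qed
      obtain z where zX: "z \<in> X" and conv: "\<forall>e::real. e > 0 \<longrightarrow> (\<exists>N. \<forall>n\<ge>N. delta_w X w (v n) z < ennreal e)"
        using assms(4) vX cauchy unfolding complete_pmetric_def by blast
      obtain e where e: "e > 0" "\<forall>u\<in>X. u \<noteq> z \<longrightarrow> ennreal e \<le> delta_w X w u z"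
        using isolated[OF assms(2,3) zX] by blast
      obtain N where N: "\<forall>n\<ge>N. delta_w X w (v n) z < ennreal e" using conv e(1) by blast
      have "v n = z" if "n \<ge> N" for n
        using N e(2) vX that by (meson not_le)
      then have "v N = v (Suc N)" by simp
      then show False using vinj by (simp add: inj_eq)
    qed
    define P where "P = {p. is_path X x y p \<and> path_length w p < R}"
    have PT: "P \<subseteq> T" unfolding P_def T_def is_path_def by auto
    have finP: "finite P" using PT finT by (rule finite_subset)
    have "D < R" by (rule DR)
    then obtain p0 where "p0 \<in> {p. is_path X x y p}" "path_length w p0 < R"
      unfolding D_def delta_w_def by (auto simp: INF_less_iff)
    then have Pne: "P \<noteq> {}" unfolding P_def by auto
    have "Min (path_length w ` P) \<in> path_length w ` P" using finP Pne by (intro Min_in) auto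
    then obtain p where pP: "p \<in> P" and pmin: "path_length w p = Min (path_length w ` P)" by auto
    have "path_length w p = D"
    proof (rule antisym)
      show "D \<le> path_length w p" unfolding D_def delta_w_def
        by (rule INF_lower) (use pP in \<open>simp add: P_def\<close>)
      show "path_length w p \<le> D" unfolding D_def delta_w_def
      proof (rule INF_greatest)
        fix q assume q: "q \<in> {p. is_path X x y p}"
        show "path_length w p \<le> path_length w q"
        proof (cases "q \<in> P")
          case True then show ?thesis unfolding pmin using finP by (intro Min_le) auto
        next
          case False
          then have "R \<le> path_length w q" using q unfolding P_def by auto
          moreover have "path_length w p < R" using pP unfolding P_def by auto
          ultimately show ?thesis by simp
        qed
      qed
    qed
    then show ?thesis using pP unfolding is_geodesic_def P_def D_def by auto
  qed
qed

end
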